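(* Let $0<\lambda<\frac{5-\sqrt{21}}{2}$ and let $K$ be the attractor of the IFS $f_1(x)=\lambda x$, $f_2(x)=\lambda x+2\lambda$, $f_3(x)=\lambda x+3\lambda-\lambda^2$, $f_4(x)=\lambda x+1-\lambda$. Then $U_{2i+1}=\emptyset$ for every integer $i\ge1$.
   Context: A coding of $x\in K$ is a sequence $(i_n)\in\{1,2,3,4\}^{\mathbb{N}}$ with $x=\lim_{n\to\infty}f_{i_1}\circ\cdots\circ f_{i_n}(0)$. $U_k$ denotes the set of $x\in K$ having exactly $k$ distinct codings. *)

theory Defs
  imports "HOL-Analysis.Analysis"
begin

definition ifs_map :: "real \<Rightarrow> nat \<Rightarrow> real \<Rightarrow> real" where
  "ifs_map lam i x =
     (if i = 1 then lam * x
      else if i = 2 then lam * x + 2 * lam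
      else if i = 3 then lam * x + 3 * lam - lam ^ 2
      else lam * x + 1 - lam)"

primrec iter_comp :: "real \<Rightarrow> (nat \<Rightarrow> nat) \<Rightarrow> nat \<Rightarrow> real \<Rightarrow> real" where
  "iter_comp lam s 0 = id"
| "iter_comp lam s (Suc n) = iter_comp lam s n \<circ> ifs_map lam (s n)"

definition attractor :: "real \<Rightarrow> real set" where
  "attractor lam = (THE K. K \<noteq> {} \<and> compact K \<and> K = (\<Union>i\<in>{1..4}. ifs_map lam i ` K))"

definition codings :: "real \<Rightarrow> real \<Rightarrow> (nat \<Rightarrow> nat) set" where
  "codings lam x = {s. (\<forall>n. s n \<in> {1..4}) \<and> (\<lambda>n. iter_comp lam s n 0) \<longlonglongrightarrow> x}"

definition U :: "real \<Rightarrow> nat \<Rightarrow> real set" where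
  "U lam k = {x \<in> attractor lam. finite (codings lam x) \<and> card (codings lam x) = k}"

end

theory Submission
  imports Defs
begin

lemma F_affine: "ifs_map lam i y = lam * y + ifs_map lam i 0"
  by (simp add: ifs_map_def)

lemma iter_affine: "iter_comp lam s n y = lam^n * y + iter_comp lam s n 0"
proof (induction n arbitrary: y)
  case 0 then show ?case by simp
next
  case (Suc n)
  have "iter_comp lam s (Suc n) y = lam^n * ifs_map lam (s n) y + iter_comp lam s n 0"
    using Suc.IH[of "ifs_map lam (s n) y"] by simp
  moreover have "iter_comp lam s (Suc n) 0 = lam^n * ifs_map lam (s n) 0 + iter_comp lam s n 0"
    using Suc.IH[of "ifs_map lam (s n) 0"] by simp
  ultimately show ?case
    by (subst (asm) F_affine) (simp add: algebra_simps)
qed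

lemma iter_split: "iter_comp lam s (n+m) y = iter_comp lam s n (iter_comp lam (\<lambda>k. s (n+k)) m y)"
  by (induction m arbitrary: y) auto

lemma iter_cong: "(\<forall>k<n. s k = t k) \<Longrightarrow> iter_comp lam s n = iter_comp lam t n"
  by (induction n) auto

lemma lam_facts:
  assumes "0 < lam" "lam < (5 - sqrt 21) / 2"
  shows "lam < 1/4" "4*lam - lam^2 < 1 - lam"
proof -
  have "sqrt 21 > 9/2" by (rule real_less_rsqrt) (simp add: power2_eq_square)
  then show "lam < 1/4" using assms by simp
  have "5 - 2*lam > sqrt 21" using assms by simp
  moreover have "sqrt 21 \<ge> 0" by simp
  ultimately have "(sqrt 21)^2 < (5 - 2*lam)^2"
    by (intro power_strict_mono) auto
  then have "21 < (5 - 2*lam)^2" by simp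
  then show "4*lam - lam^2 < 1 - lam" by (simp add: power2_eq_square algebra_simps)
qed

lemma F_range:
  assumes "0 < lam" "lam < 1/4" "4*lam - lam^2 < 1 - lam" "i \<in> {1..4}" "0 \<le> y" "y \<le> 1"
  shows "0 \<le> ifs_map lam i y \<and> ifs_map lam i y \<le> 1"
proof -
  have a: "0 \<le> lam * y" "lam * y \<le> lam" using assms
    by (simp_all add: mult_le_cancel_left1)
  have "lam^2 \<le> lam" using assms by (simp add: power2_eq_square mult_le_cancel_left1)
  then show ?thesis using assms by (auto simp: ifs_map_def; insert a assms; linarith)
qed

lemma iter_range:
  assumes "0 < lam" "lam < 1/4" "4*lam - lam^2 < 1 - lam" "\<forall>k. s k \<in> {1..4}" "0 \<le> y" "y \<le> 1"
  shows "0 \<le> iter_comp lam s n y \<and> iter_comp lam s n y \<le> 1"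
  using assms(5,6)
proof (induction n arbitrary: y)
  case 0 then show ?case by simp
next
  case (Suc n)
  have "0 \<le> ifs_map lam (s n) y \<and> ifs_map lam (s n) y \<le> 1"
    using F_range[OF assms(1-3)] assms(4) Suc.prems by blast
  then show ?case using Suc.IH by simp
qed

lemma coding_point:
  assumes "0 < lam" "lam < 1/4" "4*lam - lam^2 < 1 - lam" "\<forall>k. s k \<in> {1..4}"
    and lim: "(\<lambda>m. iter_comp lam s m 0) \<longlonglongrightarrow> x"
  shows "\<exists>y. 0 \<le> y \<and> y \<le> 1 \<and> x = iter_comp lam s n y"
proof -
  define c where "c = iter_comp lam s n 0"
  define T where "T m = iter_comp lam (\<lambda>k. s (n+k)) m 0" for m
  have sh: "\<forall>k. (\<lambda>k. s (n+k)) k \<in> {1..4}" using assms(4) by simp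
  have Tr: "0 \<le> T m \<and> T m \<le> 1" for m
    unfolding T_def using iter_range[OF assms(1-3) sh] by simp
  have eq: "iter_comp lam s (m+n) 0 = lam^n * T m + c" for m
    unfolding T_def c_def using iter_split[of lam s n m 0] iter_affine
    by (metis add.commute)
  have pn: "lam^n > 0" using assms by simp
  have "(\<lambda>m. iter_comp lam s (m+n) 0) \<longlonglongrightarrow> x"
    using LIMSEQ_ignore_initial_segment[OF lim] by simp
  then have "(\<lambda>m. (iter_comp lam s (m+n) 0 - c) / lam^n) \<longlonglongrightarrow> (x - c) / lam^n"
    using pn by (intro tendsto_intros) (simp_all only: less_irrefl not_False_eq_True)
  moreover have "(iter_comp lam s (m+n) 0 - c) / lam^n = T m" for m
    using assms(1) by (simp add: eq)
  ultimately have TL: "T \<longlonglongrightarrow> (x - c) / lam^n" by simp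
  have "0 \<le> (x - c) / lam^n"
    by (rule LIMSEQ_le_const[OF TL]) (use Tr in auto)
  moreover have "(x - c) / lam^n \<le> 1"
    by (rule LIMSEQ_le_const2[OF TL]) (use Tr in auto)
  moreover have "x = iter_comp lam s n ((x - c) / lam^n)"
    using iter_affine[of lam s n "(x - c) / lam^n"] assms(1) unfolding c_def by simp
  ultimately show ?thesis by blast
qed

lemma iter_inj:
  assumes "0 < lam" "iter_comp lam s n y1 = iter_comp lam s n y2"
  shows "y1 = y2"
  using assms iter_affine[of lam s n y1] iter_affine[of lam s n y2] by simp

lemma sep:
  assumes "0 < lam" "lam < 1/4" "4*lam - lam^2 < 1 - lam" "i \<in> {1..4}" "j \<in> {1..4}"
    "0 \<le> a" "a \<le> 1" "0 \<le> b" "b \<le> 1" "ifs_map lam i a = ifs_map lam j b" "i \<noteq> j"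
  shows "(i = 2 \<and> j = 3 \<and> a \<ge> 1 - lam \<and> b \<le> lam) \<or> (i = 3 \<and> j = 2 \<and> b \<ge> 1 - lam \<and> a \<le> lam)"
proof -
  have a: "0 \<le> lam * a" "lam * a \<le> lam" "0 \<le> lam * b" "lam * b \<le> lam" using assms
    by (simp_all add: mult_le_cancel_left1)
  have l2: "lam^2 \<le> lam" using assms by (simp add: power2_eq_square mult_le_cancel_left1)
  have ij: "i = 1 \<or> i = 2 \<or> i = 3 \<or> i = 4" "j = 1 \<or> j = 2 \<or> j = 3 \<or> j = 4" using assms by auto
  show ?thesis
  proof (cases "i = 2 \<and> j = 3")
    case True
    then have "lam * a + 2 * lam = lam * b + 3 * lam - lam^2" using assms(10) by (simp add: ifs_map_def)
    then have "lam * (a - b - 1 + lam) = 0" by (simp add: algebra_simps power2_eq_square)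
    then have "a = b + 1 - lam" using assms(1) by simp
    then show ?thesis using True assms by auto
  next
    case F1: False
    show ?thesis
    proof (cases "i = 3 \<and> j = 2")
      case True
      then have "lam * b + 2 * lam = lam * a + 3 * lam - lam^2" using assms(10) by (simp add: ifs_map_def)
      then have "lam * (b - a - 1 + lam) = 0" by (simp add: algebra_simps power2_eq_square)
      then have "b = a + 1 - lam" using assms(1) by simp
      then show ?thesis using True assms by auto
    next
      case False
      have False using ij assms(10,11) False F1
        by (auto simp: ifs_map_def; insert a l2 assms; linarith)
      then show ?thesis ..
    qed
  qed
qed

lemma digit4:
  assumes "0 < lam" "lam < 1/4" "4*lam - lam^2 < 1 - lam" "k \<in> {1..4}" "0 \<le> y" "y \<le> 1"
    "ifs_map lam k y \<ge> 1 - lam"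
  shows "k = 4"
proof -
  have a: "0 \<le> lam * y" "lam * y \<le> lam" using assms by (simp_all add: mult_le_cancel_left1)
  have "k = 1 \<or> k = 2 \<or> k = 3 \<or> k = 4" using assms by auto
  then show ?thesis using assms by (auto simp: ifs_map_def; insert a assms; linarith)
qed

lemma digit1:
  assumes "0 < lam" "lam < 1/4" "4*lam - lam^2 < 1 - lam" "k \<in> {1..4}" "0 \<le> y" "y \<le> 1"
    "ifs_map lam k y \<le> lam"
  shows "k = 1"
proof -
  have a: "0 \<le> lam * y" "lam * y \<le> lam" using assms by (simp_all add: mult_le_cancel_left1)
  have l2: "lam^2 \<le> lam" using assms by (simp add: power2_eq_square mult_le_cancel_left1)
  have l3: "lam^2 < 2*lam" using assms by (simp add: power2_eq_square)
  have "k = 1 \<or> k = 2 \<or> k = 3 \<or> k = 4" using assms by auto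
  then show ?thesis using assms by (auto simp: ifs_map_def; insert a l3 assms; linarith)
qed

lemma key:
  assumes L: "0 < lam" "lam < 1/4" "4*lam - lam^2 < 1 - lam"
    and s: "s \<in> codings lam x" and t: "t \<in> codings lam x"
    and agree: "\<forall>k<n. s k = t k" and d: "s n \<noteq> t n"
  shows "(s n = 2 \<and> t n = 3 \<and> s (Suc n) = 4 \<and> t (Suc n) = 1) \<or>
         (s n = 3 \<and> t n = 2 \<and> s (Suc n) = 1 \<and> t (Suc n) = 4)"
proof -
  have sd: "\<forall>k. s k \<in> {1..4}" and sl: "(\<lambda>m. iter_comp lam s m 0) \<longlonglongrightarrow> x"
    using s by (auto simp: codings_def)
  have td: "\<forall>k. t k \<in> {1..4}" and tl: "(\<lambda>m. iter_comp lam t m 0) \<longlonglongrightarrow> x"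
    using t by (auto simp: codings_def)
  obtain y where y: "0 \<le> y" "y \<le> 1" "x = iter_comp lam s (Suc (Suc n)) y"
    using coding_point[OF L sd sl, of "Suc (Suc n)"] by blast
  obtain y' where y': "0 \<le> y'" "y' \<le> 1" "x = iter_comp lam t (Suc (Suc n)) y'"
    using coding_point[OF L td tl, of "Suc (Suc n)"] by blast
  define a where "a = ifs_map lam (s (Suc n)) y"
  define b where "b = ifs_map lam (t (Suc n)) y'"
  have ar: "0 \<le> a \<and> a \<le> 1" unfolding a_def using F_range[OF L] sd y by blast
  have br: "0 \<le> b \<and> b \<le> 1" unfolding b_def using F_range[OF L] td y' by blast
  have "iter_comp lam t n = iter_comp lam s n" using iter_cong[of n t s lam] agree by simp
  then have "iter_comp lam s n (ifs_map lam (s n) a) = iter_comp lam s n (ifs_map lam (t n) b)"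
    using y(3) y'(3) unfolding a_def b_def by simp
  then have e: "ifs_map lam (s n) a = ifs_map lam (t n) b" using iter_inj L(1) by blast
  have "(s n = 2 \<and> t n = 3 \<and> a \<ge> 1 - lam \<and> b \<le> lam) \<or> (s n = 3 \<and> t n = 2 \<and> b \<ge> 1 - lam \<and> a \<le> lam)"
    using sep[OF L, of "s n" "t n" a b] sd td ar br e d by blast
  then show ?thesis
    using digit4[OF L, of "s (Suc n)" y] digit1[OF L, of "s (Suc n)" y]
      digit4[OF L, of "t (Suc n)" y'] digit1[OF L, of "t (Suc n)" y'] sd td y y'
    unfolding a_def b_def by blast
qed

lemma swap_iter:
  assumes "r n = a" "r (Suc n) = b" "\<And>z. ifs_map lam a (ifs_map lam b z) = ifs_map lam c (ifs_map lam d z)"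
  shows "iter_comp lam (r(n:=c, Suc n:=d)) (Suc (Suc n) + m) y = iter_comp lam r (Suc (Suc n) + m) y"
proof -
  let ?r = "r(n:=c, Suc n:=d)"
  have sh: "(\<lambda>k. ?r (Suc (Suc n) + k)) = (\<lambda>k. r (Suc (Suc n) + k))" by auto
  have c: "iter_comp lam ?r n = iter_comp lam r n" by (rule iter_cong) auto
  have "iter_comp lam ?r (Suc (Suc n)) z = iter_comp lam r (Suc (Suc n)) z" for z
    using c assms by simp
  then show ?thesis by (simp only: iter_split sh)
qed

lemma F24: "ifs_map lam 2 (ifs_map lam 4 z) = ifs_map lam 3 (ifs_map lam 1 z)"
  by (simp add: ifs_map_def algebra_simps power2_eq_square)

lemma swap_coding:
  assumes "r \<in> codings lam x" "r n = a" "r (Suc n) = b" "c \<in> {1..4}" "d \<in> {1..4}"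
    "\<And>z. ifs_map lam a (ifs_map lam b z) = ifs_map lam c (ifs_map lam d z)"
  shows "r(n:=c, Suc n:=d) \<in> codings lam x"
proof -
  have rd: "\<forall>k. r k \<in> {1..4}" and rl: "(\<lambda>m. iter_comp lam r m 0) \<longlonglongrightarrow> x"
    using assms(1) by (auto simp: codings_def)
  have "(\<lambda>m. iter_comp lam r (m + Suc (Suc n)) 0) \<longlonglongrightarrow> x"
    by (rule LIMSEQ_ignore_initial_segment[OF rl])
  moreover have eqs: "\<And>m. iter_comp lam (r(n:=c, Suc n:=d)) (m + Suc (Suc n)) 0 = iter_comp lam r (m + Suc (Suc n)) 0"
    using swap_iter[OF assms(2,3,6)] by (metis add.commute)
  ultimately have "(\<lambda>m. iter_comp lam (r(n:=c, Suc n:=d)) (m + Suc (Suc n)) 0) \<longlonglongrightarrow> x"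
    by (simp only: eqs)
  then have "(\<lambda>m. iter_comp lam (r(n:=c, Suc n:=d)) m 0) \<longlonglongrightarrow> x"
    by (rule LIMSEQ_offset)
  then show ?thesis using rd assms(4,5) by (auto simp: codings_def)
qed

theorem lemma2p30:
  fixes lam :: real and i :: nat
  assumes "0 < lam" and "lam < (5 - sqrt 21) / 2" and "i \<ge> 1"
  shows "U lam (2 * i + 1) = {}"
proof (rule ccontr)
  assume "U lam (2 * i + 1) \<noteq> {}"
  then obtain x where "x \<in> U lam (2 * i + 1)" by blast
  define C where "C = codings lam x"
  have fin: "finite C" and cc: "card C = 2 * i + 1"
    using \<open>x \<in> U lam (2 * i + 1)\<close> unfolding U_def C_def by auto
  note L = assms(1) lam_facts[OF assms(1,2)]
  have "\<not> card C \<le> Suc 0" using cc assms(3) by simp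
  then obtain s t where st: "s \<in> C" "t \<in> C" "s \<noteq> t"
    using card_le_Suc0_iff_eq[OF fin] by blast
  then obtain k where "s k \<noteq> t k" by blast
  then have ex: "\<exists>n. \<exists>s\<in>C. \<exists>t\<in>C. s n \<noteq> t n" using st by blast
  define n where "n = (LEAST n. \<exists>s\<in>C. \<exists>t\<in>C. s n \<noteq> t n)"
  obtain s0 t0 where s0: "s0 \<in> C" "t0 \<in> C" "s0 n \<noteq> t0 n"
    using LeastI_ex[OF ex] unfolding n_def by blast
  have agree: "\<forall>k<n. s k = t k" if "s \<in> C" "t \<in> C" for s t
    using not_less_Least[of _ "\<lambda>n. \<exists>s\<in>C. \<exists>t\<in>C. s n \<noteq> t n"] that unfolding n_def by blast
  have K: "(s n = 2 \<and> t n = 3 \<and> s (Suc n) = 4 \<and> t (Suc n) = 1) \<or>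
         (s n = 3 \<and> t n = 2 \<and> s (Suc n) = 1 \<and> t (Suc n) = 4)"
    if "s \<in> C" "t \<in> C" "s n \<noteq> t n" for s t
    using key[OF L, of s x t n] that agree[OF that(1,2)] unfolding C_def by blast
  obtain s2 t3 where s2: "s2 \<in> C" "s2 n = 2" and t3: "t3 \<in> C" "t3 n = 3"
    using K[OF s0] s0 by blast
  define C2 where "C2 = {r \<in> C. r n = 2}"
  define C3 where "C3 = {r \<in> C. r n = 3}"
  have un: "C = C2 \<union> C3"
  proof -
    have "r n = 2 \<or> r n = 3" if "r \<in> C" for r
      using K[OF that s2(1)] s2 by (cases "r n = 2") auto
    then show ?thesis unfolding C2_def C3_def by auto
  qed
  have dj: "C2 \<inter> C3 = {}" unfolding C2_def C3_def by auto
  have c24: "r (Suc n) = 4" if "r \<in> C2" for r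
    using K[of r t3] that t3 unfolding C2_def by auto
  have c31: "r (Suc n) = 1" if "r \<in> C3" for r
    using K[of r s2] that s2 unfolding C3_def by auto
  have bij: "bij_betw (\<lambda>r. r(n:=3, Suc n:=1)) C2 C3"
  proof (rule bij_betw_byWitness[where f' = "\<lambda>r. r(n:=2, Suc n:=4)"])
    show "\<forall>a\<in>C2. (a(n := 3, Suc n := 1))(n := 2, Suc n := 4) = a"
      using c24 unfolding C2_def by (auto simp: fun_eq_iff)
    show "\<forall>a\<in>C3. (a(n := 2, Suc n := 4))(n := 3, Suc n := 1) = a"
      using c31 unfolding C3_def by (auto simp: fun_eq_iff)
    show "(\<lambda>r. r(n := 3, Suc n := 1)) ` C2 \<subseteq> C3"
    proof
      fix r' assume "r' \<in> (\<lambda>r. r(n := 3, Suc n := 1)) ` C2"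
      then obtain r where r: "r \<in> C2" "r' = r(n := 3, Suc n := 1)" by blast
      have r1: "r \<in> codings lam x" "r n = 2" using r(1) unfolding C2_def C_def by auto
      have r2: "r (Suc n) = 4" using c24 r(1) by blast
      have "r' \<in> C" unfolding r(2) C_def
        by (rule swap_coding[OF r1 r2]) (simp_all add: F24)
      then show "r' \<in> C3" unfolding C3_def r(2) by simp
    qed
    show "(\<lambda>r. r(n := 2, Suc n := 4)) ` C3 \<subseteq> C2"
    proof
      fix r' assume "r' \<in> (\<lambda>r. r(n := 2, Suc n := 4)) ` C3"
      then obtain r where r: "r \<in> C3" "r' = r(n := 2, Suc n := 4)" by blast
      have r1: "r \<in> codings lam x" "r n = 3" using r(1) unfolding C3_def C_def by auto
      have r2: "r (Suc n) = 1" using c31 r(1) by blast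
      have "r' \<in> C" unfolding r(2) C_def
        by (rule swap_coding[OF r1 r2]) (simp_all add: F24)
      then show "r' \<in> C2" unfolding C2_def r(2) by simp
    qed
  qed
  have "card C2 = card C3" using bij_betw_same_card[OF bij] .
  moreover have "card C = card C2 + card C3"
    using un dj fin card_Un_disjoint[of C2 C3] by simp
  ultimately have "card C = 2 * card C2" by simp
  then show False using cc by presburger
qed

end
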